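(* Fix $a>0$ and let $\Phi:\mathbb{R}\to\mathbb{R}$ be the static kink on the wormhole of throat radius $a$, i.e. the odd smooth solution of \[ \Phi''(r)+\frac{2r}{r^2+a^2}\Phi'(r) = -2\Phi(r)\bigl(1-\Phi(r)^2\bigr), \qquad r\in\mathbb{R}, \] satisfying $\Phi(r)\to 1$ as $r\to+\infty$ and $\Phi(r)\to -1$ as $r\to-\infty$. Then $\Phi$ is linearly stable: the Schrödinger operator \[ L=-\frac{d^2}{dr^2}+V(r),\qquad V(r)=\frac{a^2}{(r^2+a^2)^2}-2\bigl(1-3\Phi(r)^2\bigr), \] acting on smooth square-integrable functions on $\mathbb{R}$, has no negative eigenvalues; that is, if $v\neq 0$ is smooth and square integrable on $\mathbb{R}$ with $Lv=\omega^2 v$ for some real number $\omega^2$, then $\omega^2\ge 0$.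
   Context: This arises from the field equation $\phi_{tt}=\phi_{rr}+\frac{2r}{r^2+a^2}\phi_r+2\phi(1-\phi^2)$ for spherically symmetric $\phi^4$ fields on the wormhole metric $g=-dt^2+dr^2+(r^2+a^2)(d\vartheta^2+\sin^2\vartheta\,d\varphi^2)$; linearising $\phi=\Phi+e^{i\omega t}(r^2+a^2)^{-1/2}v(r)$ about the static kink $\Phi$ gives the eigenvalue problem $Lv=\omega^2v$. Linear stability of $\Phi$ means that $L$ has no negative eigenvalues. *)

theory Defs
  imports "HOL-Analysis.Analysis"
begin

definition smooth :: "(real \<Rightarrow> real) \<Rightarrow> bool" where
  "smooth f \<longleftrightarrow> (\<forall>n x. ((deriv ^^ n) f) differentiable (at x))"

definition square_integrable :: "(real \<Rightarrow> real) \<Rightarrow> bool" where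
  "square_integrable v \<longleftrightarrow> v \<in> borel_measurable lborel \<and> integrable lborel (\<lambda>x. (v x)^2)"

definition kink_potential :: "real \<Rightarrow> (real \<Rightarrow> real) \<Rightarrow> real \<Rightarrow> real" where
  "kink_potential a \<Phi> r = a^2 / (r^2 + a^2)^2 - 2 * (1 - 3 * (\<Phi> r)^2)"

end

theory Submission
  imports Defs
begin


lemma nonint_tail:
  fixes g :: "real \<Rightarrow> real"
  assumes int: "integrable lborel g" and nn: "\<And>x. g x \<ge> 0"
    and c: "c > 0" and tail: "\<And>x. x \<ge> T \<Longrightarrow> g x \<ge> c"
  shows False
proof -
  define L where "L = integral\<^sup>L lborel g / c + 1"
  have "integral\<^sup>L lborel g \<ge> 0" by (rule integral_nonneg_AE) (simp add: nn)
  hence L0: "L > 0" unfolding L_def using c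
    by (metis add_nonneg_pos divide_nonneg_pos zero_less_one)
  have i1: "integrable lborel (\<lambda>x. c * indicator {T..T+L} x :: real)"
    by (intro integrable_mult_right) (simp add: integrable_real_indicator emeasure_lborel_Icc_eq)
  have "integral\<^sup>L lborel (\<lambda>x. c * indicator {T..T+L} x :: real) \<le> integral\<^sup>L lborel g"
    apply (rule integral_mono[OF i1 int])
    using tail nn c by (auto simp: indicator_def)
  moreover have "integral\<^sup>L lborel (\<lambda>x. c * indicator {T..T+L} x :: real) = c * L"
    using L0 by simp
  ultimately have "c * L \<le> integral\<^sup>L lborel g" using L0 by simp
  moreover have "c * L = integral\<^sup>L lborel g + c" unfolding L_def using c by (simp add: field_simps)
  ultimately show False using c by simp
qed

lemma tail_decay:
  fixes u u' u'' :: "real \<Rightarrow> real"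
  assumes d1: "\<And>x. (u has_real_derivative u' x) (at x)"
    and d2: "\<And>x. (u' has_real_derivative u'' x) (at x)"
    and pos: "\<And>x. x \<ge> T \<Longrightarrow> u x * u'' x \<ge> 0"
    and int: "integrable lborel (\<lambda>x. (u x)^2)"
  shows "((\<lambda>x. u x * u' x) \<longlongrightarrow> 0) at_top \<and> ((\<lambda>x. (u x)^2) \<longlongrightarrow> 0) at_top"
proof -
  define p where "p x = u x * u' x" for x
  have dp: "(p has_real_derivative (u' x * u' x + u x * u'' x)) (at x)" for x
    unfolding p_def using DERIV_mult[OF d1 d2, of x] by (simp add: algebra_simps)
  have dq: "((\<lambda>x. (u x)^2) has_real_derivative 2 * p x) (at x)" for x
    unfolding p_def using DERIV_power[OF d1[of x], of 2] by (simp add: algebra_simps)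
  have pmono: "p x \<le> p y" if "T \<le> x" "x \<le> y" for x y
  proof (rule DERIV_nonneg_imp_nondecreasing[OF that(2)])
    fix t assume "x \<le> t" "t \<le> y"
    then show "\<exists>y. (p has_real_derivative y) (at t) \<and> 0 \<le> y"
      using dp[of t] pos[of t] that by (intro exI[of _ "u' t * u' t + u t * u'' t"]) auto
  qed
  have pneg: "p s \<le> 0" if "s \<ge> T" for s
  proof (rule ccontr)
    assume "\<not> p s \<le> 0" hence ps: "p s > 0" by simp
    have grow: "(u x)^2 \<ge> (u s)^2 + 2 * p s * (x - s)" if "x \<ge> s" for x
    proof -
      have "(u s)^2 - 2 * p s * s \<le> (u x)^2 - 2 * p s * x"
      proof (rule DERIV_nonneg_imp_nondecreasing[OF that, where f = "\<lambda>x. (u x)^2 - 2 * p s * x"])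
        fix t assume t: "s \<le> t" "t \<le> x"
        have "((\<lambda>x. (u x)^2 - 2 * p s * x) has_real_derivative (2 * p t - 2 * p s)) (at t)"
          by (rule derivative_eq_intros dq | simp)+
        moreover have "p s \<le> p t" using pmono[of s t] t \<open>s \<ge> T\<close> by simp
        ultimately show "\<exists>y. ((\<lambda>x. (u x)^2 - 2 * p s * x) has_real_derivative y) (at t) \<and> 0 \<le> y"
          by auto
      qed
      then show ?thesis by (simp add: algebra_simps)
    qed
    show False
    proof (rule nonint_tail[OF int, of 1 "s + 1 / (2 * p s)"])
      fix x :: real assume x: "s + 1 / (2 * p s) \<le> x"
      have "x \<ge> s" using x ps by (smt (verit) divide_pos_pos)
      have "2 * p s * (x - s) \<ge> 2 * p s * (1 / (2 * p s))"
        using x ps by (intro mult_left_mono) auto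
      hence "2 * p s * (x - s) \<ge> 1" using ps by simp
      then show "1 \<le> (u x)^2" using grow[OF \<open>x \<ge> s\<close>] by (smt (verit) zero_le_power2)
    qed auto
  qed
  have qmono: "(u y)^2 \<le> (u x)^2" if "T \<le> x" "x \<le> y" for x y
  proof (rule DERIV_nonpos_imp_nonincreasing[OF that(2)])
    fix t assume "x \<le> t" "t \<le> y"
    then show "\<exists>y. ((\<lambda>x. (u x)^2) has_real_derivative y) (at t) \<and> y \<le> 0"
      using dq[of t] pneg[of t] that by (intro exI[of _ "2 * p t"]) auto
  qed
  have lim2: "((\<lambda>x. (u x)^2) \<longlongrightarrow> 0) at_top"
  proof (rule order_tendstoI)
    fix a :: real assume "a < 0"
    then show "\<forall>\<^sub>F x in at_top. a < (u x)^2" by (simp add: less_le_trans)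
  next
    fix a :: real assume a: "0 < a"
    obtain x0 where x0: "x0 \<ge> T" "(u x0)^2 < a"
    proof (rule ccontr)
      assume "\<not> thesis"
      hence "\<And>x. x \<ge> T \<Longrightarrow> a \<le> (u x)^2" using that by force
      then show False using nonint_tail[OF int _ a] by auto
    qed
    show "\<forall>\<^sub>F x in at_top. (u x)^2 < a"
      unfolding eventually_at_top_linorder
      using x0 qmono by (intro exI[of _ x0]) (auto intro: le_less_trans)
  qed
  have limp: "(p \<longlongrightarrow> 0) at_top"
  proof (rule order_tendstoI)
    fix a :: real assume "0 < a"
    then show "\<forall>\<^sub>F x in at_top. p x < a"
      unfolding eventually_at_top_linorder using pneg by (intro exI[of _ T]) (auto intro: le_less_trans)
  next
    fix a :: real assume a: "a < 0"
    obtain x0 where x0: "x0 \<ge> T" "p x0 > a"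
    proof (rule ccontr)
      assume "\<not> thesis"
      hence pa: "\<And>x. x \<ge> T \<Longrightarrow> p x \<le> a" using that by force
      define X where "X = T + (u T)^2 / (- 2 * a) + 1"
      have "(u T)^2 / (- 2 * a) \<ge> 0" using a by (intro divide_nonneg_pos) auto
      hence "X \<ge> T" unfolding X_def by simp
      have "(u X)^2 - 2 * a * X \<le> (u T)^2 - 2 * a * T"
      proof (rule DERIV_nonpos_imp_nonincreasing[OF \<open>X \<ge> T\<close>, where f = "\<lambda>x. (u x)^2 - 2 * a * x"])
        fix t assume t: "T \<le> t" "t \<le> X"
        have "((\<lambda>x. (u x)^2 - 2 * a * x) has_real_derivative (2 * p t - 2 * a)) (at t)"
          by (rule derivative_eq_intros dq | simp)+
        then show "\<exists>y. ((\<lambda>x. (u x)^2 - 2 * a * x) has_real_derivative y) (at t) \<and> y \<le> 0"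
          using pa[of t] t by auto
      qed
      hence "(u X)^2 \<le> (u T)^2 + 2 * a * (X - T)" by (simp add: algebra_simps)
      also have "2 * a * (X - T) = 2 * a * ((u T)^2 / (- 2 * a)) + 2 * a" unfolding X_def by (simp add: algebra_simps)
      also have "2 * a * ((u T)^2 / (- 2 * a)) = -((u T)^2)" using a by (simp add: field_simps)
      finally have "(u X)^2 \<le> 2 * a" by simp
      then show False using a by (smt (verit) zero_le_power2)
    qed
    show "\<forall>\<^sub>F x in at_top. a < p x"
      unfolding eventually_at_top_linorder
      using x0 pmono by (intro exI[of _ x0]) (auto intro: less_le_trans)
  qed
  show ?thesis using lim2 limp unfolding p_def by simp
qed

lemma no_neg_eig:
  fixes f G H V v v' v'' :: "real \<Rightarrow> real" and lam C :: real
  assumes fpos: "\<And>x. f x > 0"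
    and df: "\<And>x. (f has_real_derivative G x) (at x)"
    and dG: "\<And>x. (G has_real_derivative (V x * f x - H x)) (at x)"
    and dv: "\<And>x. (v has_real_derivative v' x) (at x)"
    and dv': "\<And>x. (v' has_real_derivative v'' x) (at x)"
    and eq: "\<And>x. v'' x = (V x - lam) * v x"
    and Hnn: "\<And>x. H x \<ge> 0"
    and Gb: "\<And>x. \<bar>G x\<bar> \<le> C * f x"
    and lam: "lam < 0"
    and top1: "((\<lambda>x. v x * v' x) \<longlongrightarrow> 0) at_top"
    and top2: "((\<lambda>x. (v x)^2) \<longlongrightarrow> 0) at_top"
    and bot1: "((\<lambda>x. v x * v' x) \<longlongrightarrow> 0) at_bot"
    and bot2: "((\<lambda>x. (v x)^2) \<longlongrightarrow> 0) at_bot"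
  shows "v x = 0"
proof (rule ccontr)
  assume vx0: "v x \<noteq> 0"
  define W where "W y = f y * v' y - G y * v y" for y
  define F where "F y = 2 * v y * W y / f y" for y
  define D where "D y = 2 * (W y)^2 / (f y)^2 + 2 * (H y - lam * f y) * (v y)^2 / f y" for y
  have dW: "(W has_real_derivative ((H y - lam * f y) * v y)) (at y)" for y
  proof -
    have "(W has_real_derivative (f y * v'' y + G y * v' y - (G y * v' y + (V y * f y - H y) * v y))) (at y)"
      unfolding W_def[abs_def]
      by (intro DERIV_diff DERIV_mult' df dv dv' dG)
    moreover have "f y * v'' y + G y * v' y - (G y * v' y + (V y * f y - H y) * v y) = (H y - lam * f y) * v y"
      by (simp add: eq algebra_simps)
    ultimately show ?thesis by simp
  qed
  have dF: "(F has_real_derivative D y) (at y)" for y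
  proof -
    have fy: "f y \<noteq> 0" using fpos[of y] by simp
    have m: "((\<lambda>y. 2 * v y * W y) has_real_derivative ((2 * v' y) * W y + (2 * v y) * ((H y - lam * f y) * v y))) (at y)"
      using DERIV_mult[OF DERIV_cmult[OF dv, of 2] dW, of y] by (simp add: algebra_simps)
    have "(F has_real_derivative
        (((2 * v' y) * W y + (2 * v y) * ((H y - lam * f y) * v y)) * f y - (2 * v y * W y) * G y) / (f y * f y)) (at y)"
      unfolding F_def[abs_def]
      by (intro DERIV_divide m df fy)
    moreover have "(((2 * v' y) * W y + (2 * v y) * ((H y - lam * f y) * v y)) * f y - (2 * v y * W y) * G y) / (f y * f y) = D y"
      unfolding D_def using fy by (simp add: W_def field_simps power2_eq_square)
    ultimately show ?thesis by simp
  qed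
  have Dnn: "D y \<ge> 0" for y
  proof -
    have "lam * f y < 0" using mult_neg_pos[OF lam fpos[of y]] .
    hence "H y - lam * f y \<ge> 0" using Hnn[of y] by linarith
    then show ?thesis unfolding D_def using fpos[of y]
      by (intro add_nonneg_nonneg divide_nonneg_pos mult_nonneg_nonneg) auto
  qed
  have Dpos: "D x > 0"
  proof -
    have "2 * (H x - lam * f x) * (v x)^2 / f x > 0"
      using fpos[of x] Hnn[of x] lam vx0 mult_neg_pos[OF lam fpos[of x]]
      by (intro divide_pos_pos mult_pos_pos) auto
    moreover have "2 * (W x)^2 / (f x)^2 \<ge> 0" by simp
    ultimately show ?thesis unfolding D_def by linarith
  qed
  have Fmono: "F y \<le> F z" if "y \<le> z" for y z
    by (rule DERIV_nonneg_imp_nondecreasing[OF that]) (use dF Dnn in blast)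
  have Falt: "F y = 2 * (v y * v' y) - 2 * (G y / f y) * (v y)^2" for y
    unfolding F_def W_def using fpos[of y] by (simp add: field_simps power2_eq_square)
  have Fbound: "norm (F y) \<le> 2 * \<bar>v y * v' y\<bar> + 2 * C * (v y)^2" for y
  proof -
    have "\<bar>G y / f y\<bar> = \<bar>G y\<bar> / f y" using fpos[of y] by simp
    also have "\<dots> \<le> C" using Gb[of y] pos_divide_le_eq[OF fpos[of y]] by (simp add: mult.commute)
    finally have "\<bar>G y / f y\<bar> \<le> C" .
    hence "\<bar>G y / f y\<bar> * (v y)^2 \<le> C * (v y)^2" by (intro mult_right_mono) auto
    hence "\<bar>2 * (G y / f y) * (v y)^2\<bar> \<le> 2 * C * (v y)^2" by (simp add: abs_mult)
    then show ?thesis unfolding Falt real_norm_def by linarith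
  qed
  have Ftop: "(F \<longlongrightarrow> 0) at_top"
    by (rule Lim_null_comparison[OF always_eventually[OF allI[OF Fbound]]])
       (use tendsto_add[OF tendsto_mult[OF tendsto_const tendsto_rabs_zero[OF top1]] tendsto_mult[OF tendsto_const top2], of 2 "2 * C"] in simp)
  have Fbot: "(F \<longlongrightarrow> 0) at_bot"
    by (rule Lim_null_comparison[OF always_eventually[OF allI[OF Fbound]]])
       (use tendsto_add[OF tendsto_mult[OF tendsto_const tendsto_rabs_zero[OF bot1]] tendsto_mult[OF tendsto_const bot2], of 2 "2 * C"] in simp)
  obtain d where d: "d > 0" "\<And>h. h > 0 \<Longrightarrow> h < d \<Longrightarrow> F x < F (x + h)"
    using DERIV_pos_inc_right[OF dF Dpos] by blast
  define x1 where "x1 = x + d / 2"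
  have Fx1: "F x < F x1" unfolding x1_def using d by simp
  have "F x1 \<le> 0"
    by (rule tendsto_lowerbound[OF Ftop]) (auto simp: eventually_at_top_linorder intro!: exI[of _ x1] Fmono)
  moreover have "0 \<le> F x"
    by (rule tendsto_upperbound[OF Fbot]) (auto simp: eventually_at_bot_linorder intro!: exI[of _ x] Fmono)
  ultimately show False using Fx1 by simp
qed

lemma kink_props:
  fixes a :: real and Phi p q :: "real \<Rightarrow> real"
  assumes a: "a > 0"
    and dPhi: "\<And>x. (Phi has_real_derivative p x) (at x)"
    and dp: "\<And>x. (p has_real_derivative q x) (at x)"
    and ode: "\<And>x. q x + (2 * x / (x^2 + a^2)) * p x = - 2 * Phi x * (1 - (Phi x)^2)"
    and odd: "\<And>x. Phi (-x) = - Phi x"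
    and top: "(Phi \<longlongrightarrow> 1) at_top"
  shows "p x > 0 \<and> (Phi x)^2 \<le> 1 \<and> x * Phi x \<ge> 0 \<and> p x \<ge> 1 - (Phi x)^2"
proof -
  have Rpos: "y^2 + a^2 > 0" for y using a by (simp add: add_nonneg_pos)
  have peven: "p (- y) = p y" for y
  proof -
    have "((\<lambda>x. Phi (- x)) has_real_derivative - p (- y)) (at y)"
      using DERIV_mirror[of Phi "p (-y)" y] dPhi[of "-y"] by simp
    moreover have "(\<lambda>x. Phi (- x)) = (\<lambda>x. - Phi x)" using odd by auto
    ultimately have "((\<lambda>x. - Phi x) has_real_derivative - p (- y)) (at y)" by simp
    moreover have "((\<lambda>x. - Phi x) has_real_derivative - p y) (at y)" using DERIV_minus[OF dPhi[of y]] .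
    ultimately show ?thesis using DERIV_unique by fastforce
  qed
  have Phi0: "Phi 0 = 0" using odd[of 0] by simp
  have qeq: "q y = - 2 * Phi y * (1 - (Phi y)^2) - (2 * y / (y^2 + a^2)) * p y" for y
    using ode[of y] by simp
  have contPhi: "isCont Phi y" for y using DERIV_isCont[OF dPhi] .
  have contp: "isCont p y" for y using DERIV_isCont[OF dp] .
  define E where "E y = (p y)^2 / 2 + (Phi y)^2 - (Phi y)^4 / 2" for y
  have dE: "(E has_real_derivative (- (2 * y / (y^2 + a^2)) * (p y)^2)) (at y)" for y
  proof -
    have "(E has_real_derivative (p y * q y + 2 * Phi y * p y - 2 * (Phi y)^3 * p y)) (at y)"
      unfolding E_def[abs_def]
      by (rule derivative_eq_intros dPhi dp refl | simp add: algebra_simps)+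
    moreover have "p y * q y + 2 * Phi y * p y - 2 * (Phi y)^3 * p y = - (2 * y / (y^2 + a^2)) * (p y)^2"
      unfolding qeq by (simp add: algebra_simps power2_eq_square power3_eq_cube)
    ultimately show ?thesis by simp
  qed
  have Emono: "E z \<le> E y" if "0 \<le> y" "y \<le> z" for y z
  proof (rule DERIV_nonpos_imp_nonincreasing[OF that(2)])
    fix t assume "y \<le> t" "t \<le> z"
    hence "t \<ge> 0" using that by simp
    hence "0 \<le> 2 * t / (t^2 + a^2) * (p t)^2" using Rpos[of t]
      by (intro mult_nonneg_nonneg divide_nonneg_pos) auto
    hence "- (2 * t / (t^2 + a^2)) * (p t)^2 \<le> 0" by linarith
    then show "\<exists>d. (E has_real_derivative d) (at t) \<and> d \<le> 0" using dE by blast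
  qed
  have Ebound: "E y \<ge> 1/2" if "y \<ge> 0" for y
  proof (rule ccontr)
    assume "\<not> E y \<ge> 1/2"
    hence del: "1/2 - E y > 0" by simp
    have "((\<lambda>x. (Phi x)^2 - (Phi x)^4 / 2) \<longlongrightarrow> 1^2 - 1^4/2) at_top"
      by (intro tendsto_intros top) auto
    hence "((\<lambda>x. (Phi x)^2 - (Phi x)^4 / 2) \<longlongrightarrow> 1/2) at_top" by simp
    hence "\<forall>\<^sub>F x in at_top. (Phi x)^2 - (Phi x)^4 / 2 > E y"
      by (rule order_tendstoD(1)) (use del in linarith)
    then obtain N where N: "\<And>x. x \<ge> N \<Longrightarrow> (Phi x)^2 - (Phi x)^4 / 2 > E y"
      unfolding eventually_at_top_linorder by blast
    define z where "z = max N y"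
    have "E z \<le> E y" using Emono[OF that] unfolding z_def by simp
    moreover have "(Phi z)^2 - (Phi z)^4 / 2 > E y" using N unfolding z_def by simp
    ultimately have "(p z)^2 / 2 < 0" unfolding E_def by linarith
    then show False using zero_le_power2[of "p z"] by linarith
  qed
  have psq: "(p y)^2 \<ge> (1 - (Phi y)^2)^2" if "y \<ge> 0" for y
  proof -
    have "(1 - (Phi y)^2)^2 = 1 - 2 * (Phi y)^2 + (Phi y)^4"
      by (simp add: algebra_simps power2_eq_square power4_eq_xxxx)
    then show ?thesis using Ebound[OF that] unfolding E_def by linarith
  qed
  have pnz: "p x1 \<noteq> 0" if x1: "x1 \<ge> 0" for x1
  proof
    assume px1: "p x1 = 0"
    have "(1 - (Phi x1)^2)^2 \<le> 0" using psq[OF x1] px1 by simp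
    hence "(Phi x1)^2 = 1" by simp
    define s where "s = Phi x1"
    have s2: "s * s = 1" using \<open>(Phi x1)^2 = 1\<close> unfolding s_def by (simp add: power2_eq_square)
    have "\<forall>y. 0 \<le> y \<and> y \<le> x1 \<longrightarrow> isCont (\<lambda>y. \<bar>Phi y\<bar>) y"
      using contPhi by (auto intro: continuous_intros)
    then obtain M where M: "\<And>y. 0 \<le> y \<Longrightarrow> y \<le> x1 \<Longrightarrow> \<bar>Phi y\<bar> \<le> M"
      using isCont_eq_Ub[OF x1] by blast
    have M0: "M \<ge> 0" using M[of 0] x1 by simp
    define K where "K = 1 + 2 * M * (1 + M) + 2 / a"
    define z where "z y = (1 - s * Phi y)^2 + (p y)^2" for y
    define h where "h y = exp (K * y) * z y" for y
    have dz: "(z has_real_derivative (2 * (1 - s * Phi y) * (- s * p y) + 2 * p y * q y)) (at y)" for y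
      unfolding z_def[abs_def]
      by (rule derivative_eq_intros dPhi dp refl | simp)+
    have key: "K * z y + (2 * (1 - s * Phi y) * (- s * p y) + 2 * p y * q y) \<ge> 0"
      if y: "0 \<le> y" "y \<le> x1" for y
    proof -
      define Y where "Y = 1 - s * Phi y"
      define A where "A = - s - 2 * Phi y * (1 + s * Phi y)"
      define B where "B = 4 * y / (y^2 + a^2)"
      have fac: "1 - (Phi y)^2 = Y * (1 + s * Phi y)"
        unfolding Y_def using s2 by (simp add: algebra_simps power2_eq_square)
      have zexp: "2 * (1 - s * Phi y) * (- s * p y) + 2 * p y * q y = 2 * p y * Y * A - B * (p y)^2"
        unfolding qeq Y_def A_def B_def
        using fac unfolding Y_def
        by (simp add: algebra_simps power2_eq_square) blast
      have "(s - 1) * (s + 1) = 0" using s2 by (simp add: algebra_simps)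
      hence sc: "s = 1 \<or> s = -1" by auto
      have PM: "\<bar>Phi y\<bar> \<le> M" using M y by simp
      have sP: "\<bar>s * Phi y\<bar> = \<bar>Phi y\<bar>" using sc by auto
      have "\<bar>1 + s * Phi y\<bar> \<le> 1 + \<bar>s * Phi y\<bar>"
        using abs_triangle_ineq[of 1 "s * Phi y"] by simp
      hence b1: "\<bar>1 + s * Phi y\<bar> \<le> 1 + M" using sP PM by linarith
      have "\<bar>2 * Phi y * (1 + s * Phi y)\<bar> = 2 * (\<bar>Phi y\<bar> * \<bar>1 + s * Phi y\<bar>)"
        by (simp add: abs_mult)
      also have "\<dots> \<le> 2 * (M * (1 + M))"
        using mult_mono[OF PM b1 M0 abs_ge_zero] by simp
      finally have b2: "\<bar>2 * Phi y * (1 + s * Phi y)\<bar> \<le> 2 * M * (1 + M)" by simp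
      have "\<bar>A\<bar> \<le> \<bar>- s\<bar> + \<bar>- (2 * Phi y * (1 + s * Phi y))\<bar>"
        unfolding A_def using abs_triangle_ineq[of "-s" "- (2 * Phi y * (1 + s * Phi y))"] by simp
      hence Ab: "\<bar>A\<bar> \<le> 1 + 2 * M * (1 + M)" using b2 sc by auto
      have B0: "B \<ge> 0" unfolding B_def using y Rpos[of y] by simp
      have Bb: "B \<le> 2 / a"
      proof -
        have "0 \<le> (y - a)^2" by simp
        hence "0 \<le> y^2 + a^2 - 2 * (y * a)" by (simp add: power2_diff mult.assoc)
        hence "4 * (y * a) \<le> 2 * (y^2 + a^2)" by (simp add: algebra_simps)
        hence "4 * y * a \<le> 2 * (y^2 + a^2)" by (simp add: mult.assoc)
        hence "4 * y \<le> 2 * (y^2 + a^2) / a" using a by (simp add: pos_le_divide_eq)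
        hence "4 * y \<le> 2 / a * (y^2 + a^2)" by simp
        then show ?thesis unfolding B_def using Rpos[of y] by (simp add: pos_divide_le_eq)
      qed
      define c0 where "c0 = 1 + 2 * M * (1 + M)"
      define ZZ where "ZZ = (p y)^2 + Y^2"
      have t1: "2 * p y * Y * A + c0 * ZZ \<ge> 0"
      proof -
        have "0 \<le> (\<bar>p y\<bar> - \<bar>Y\<bar>)^2" by simp
        hence "0 \<le> (p y)^2 + Y^2 - 2 * \<bar>p y\<bar> * \<bar>Y\<bar>" by (simp add: power2_diff)
        hence "\<bar>2 * p y * Y\<bar> \<le> ZZ" unfolding ZZ_def by (simp add: abs_mult)
        hence "\<bar>2 * p y * Y\<bar> * \<bar>A\<bar> \<le> ZZ * c0"
          using Ab unfolding c0_def by (intro mult_mono) auto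
        hence "\<bar>2 * p y * Y * A\<bar> \<le> c0 * ZZ" by (simp add: abs_mult mult.commute)
        then show ?thesis by arith
      qed
      have t2: "B * (p y)^2 \<le> 2 / a * ZZ"
      proof -
        have "B * (p y)^2 \<le> 2 / a * (p y)^2" using mult_right_mono[OF Bb zero_le_power2[of "p y"]] .
        also have "\<dots> \<le> 2 / a * ZZ" unfolding ZZ_def using a by (intro mult_left_mono) auto
        finally show ?thesis .
      qed
      have zY: "K * z y = c0 * ZZ + 2 / a * ZZ" unfolding z_def Y_def ZZ_def K_def c0_def
        by (simp add: algebra_simps)
      show ?thesis unfolding zexp zY using t1 t2 by linarith
    qed
    have dh: "(h has_real_derivative exp (K * y) * (K * z y + (2 * (1 - s * Phi y) * (- s * p y) + 2 * p y * q y))) (at y)" for y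
    proof -
      have "(h has_real_derivative (exp (K * y) * K * z y + exp (K * y) * (2 * (1 - s * Phi y) * (- s * p y) + 2 * p y * q y))) (at y)"
        unfolding h_def[abs_def]
        by (rule derivative_eq_intros dz refl | simp)+
      then show ?thesis by (simp add: algebra_simps)
    qed
    have "h 0 \<le> h x1"
    proof (rule DERIV_nonneg_imp_nondecreasing[OF x1])
      fix t assume "0 \<le> t" "t \<le> x1"
      then show "\<exists>d. (h has_real_derivative d) (at t) \<and> 0 \<le> d"
        using dh[of t] key[of t] by (intro exI[of _ "exp (K * t) * (K * z t + (2 * (1 - s * Phi t) * (- s * p t) + 2 * p t * q t))"]) simp
    qed
    moreover have "h x1 = 0" unfolding h_def z_def using px1 s2 unfolding s_def by simp
    moreover have "h 0 > 0" unfolding h_def z_def using Phi0 by (simp add: add_pos_nonneg)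
    ultimately show False by simp
  qed
  obtain N where N: "\<And>x. x \<ge> N \<Longrightarrow> Phi x > 1/2"
    using order_tendstoD(1)[OF top, of "1/2"] unfolding eventually_at_top_linorder by auto
  define s1 where "s1 = max N 1"
  have s1: "s1 > 0" "Phi s1 > 0" using N[of s1] unfolding s1_def by auto
  obtain t where t: "t > 0" "t < s1" "Phi s1 - Phi 0 = (s1 - 0) * p t"
    using MVT2[OF s1(1), of Phi p] dPhi by blast
  have pt: "p t > 0" using t s1 Phi0 by (simp add: zero_less_mult_iff)
  have contp_on: "continuous_on S p" for S by (intro continuous_at_imp_continuous_on ballI contp)
  have ppos: "p y > 0" if y: "y \<ge> 0" for y
  proof (rule ccontr)
    assume "\<not> p y > 0"
    hence py: "p y \<le> 0" by simp
    show False
    proof (cases "y \<le> t")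
      case True
      obtain w where "w \<ge> y" "w \<le> t" "p w = 0" using IVT'[of p y 0 t, OF py _ True contp_on] pt by auto
      then show False using pnz[of w] y by simp
    next
      case False
      obtain w where "w \<ge> t" "w \<le> y" "p w = 0" using IVT2'[of p y 0 t, OF py _ _ contp_on] pt False by auto
      then show False using pnz[of w] t by simp
    qed
  qed
  have Phimono: "Phi y \<le> Phi z" if "0 \<le> y" "y \<le> z" for y z
  proof (rule DERIV_nonneg_imp_nondecreasing[OF that(2)])
    fix w assume "y \<le> w" "w \<le> z"
    then show "\<exists>d. (Phi has_real_derivative d) (at w) \<and> 0 \<le> d"
      using dPhi[of w] ppos[of w] that by (intro exI[of _ "p w"]) auto
  qed
  have Phinn: "Phi y \<ge> 0" if "y \<ge> 0" for y using Phimono[of 0 y] that Phi0 by simp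
  have Phile1: "Phi y \<le> 1" if y: "y \<ge> 0" for y
  proof (rule ccontr)
    assume "\<not> Phi y \<le> 1"
    hence "1 < Phi y" by simp
    from order_tendstoD(2)[OF top this] obtain N2 where N2: "\<And>x. x \<ge> N2 \<Longrightarrow> Phi x < Phi y"
      unfolding eventually_at_top_linorder by auto
    have "Phi y \<le> Phi (max N2 y)" using Phimono[OF y] by simp
    moreover have "Phi (max N2 y) < Phi y" using N2 by simp
    ultimately show False by simp
  qed
  have half: "p y > 0 \<and> (Phi y)^2 \<le> 1 \<and> y * Phi y \<ge> 0 \<and> p y \<ge> 1 - (Phi y)^2" if y: "y \<ge> 0" for y
  proof (intro conjI)
    show "p y > 0" using ppos[OF y] .
    have "0 \<le> Phi y" "Phi y \<le> 1" using Phinn[OF y] Phile1[OF y] by auto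
    then show sq: "(Phi y)^2 \<le> 1" by (simp add: power_le_one)
    show "y * Phi y \<ge> 0" using Phinn[OF y] y by simp
    show "p y \<ge> 1 - (Phi y)^2"
      using power2_le_imp_le[OF psq[OF y]] ppos[OF y] by simp
  qed
  show ?thesis
  proof (cases "x \<ge> 0")
    case True
    then show ?thesis using half by blast
  next
    case False
    hence "- x \<ge> 0" by simp
    from half[OF this] show ?thesis
      using peven[of x] odd[of x] by (simp add: power2_eq_square)
  qed
qed


theorem mainTheorem1:
  fixes a :: real and \<Phi> :: "real \<Rightarrow> real"
  assumes a_pos: "a > 0"
    and Phi_smooth: "smooth \<Phi>"
    and Phi_odd: "\<forall>r. \<Phi> (- r) = - \<Phi> r"
    and Phi_ode: "\<forall>r. deriv (deriv \<Phi>) r + (2 * r / (r^2 + a^2)) * deriv \<Phi> r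
                      = - 2 * \<Phi> r * (1 - (\<Phi> r)^2)"
    and Phi_top: "(\<Phi> \<longlongrightarrow> 1) at_top"
    and Phi_bot: "(\<Phi> \<longlongrightarrow> -1) at_bot"
  shows "\<forall>v \<omega>2. smooth v \<and> square_integrable v \<and> v \<noteq> (\<lambda>_. 0)
            \<and> (\<forall>r. - deriv (deriv v) r + kink_potential a \<Phi> r * v r = \<omega>2 * v r)
            \<longrightarrow> \<omega>2 \<ge> 0"
proof (intro allI impI)
  fix v :: "real \<Rightarrow> real" and lam :: real
  assume hyp: "smooth v \<and> square_integrable v \<and> v \<noteq> (\<lambda>_. 0)
            \<and> (\<forall>r. - deriv (deriv v) r + kink_potential a \<Phi> r * v r = lam * v r)"
  hence vsm: "smooth v" and vsi: "square_integrable v" and vnz: "v \<noteq> (\<lambda>_. 0)"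
    and eig: "\<And>r. - deriv (deriv v) r + kink_potential a \<Phi> r * v r = lam * v r" by auto
  show "lam \<ge> 0"
  proof (rule ccontr)
    assume "\<not> lam \<ge> 0"
    hence lam: "lam < 0" by simp
    define p where "p = deriv \<Phi>"
    define q where "q = deriv p"
    have dPhi: "(\<Phi> has_real_derivative p x) (at x)" for x
    proof -
      have "((deriv ^^ 0) \<Phi>) differentiable (at x)" using Phi_smooth unfolding smooth_def by blast
      then show ?thesis unfolding p_def by (simp add: DERIV_deriv_iff_real_differentiable)
    qed
    have dp: "(p has_real_derivative q x) (at x)" for x
    proof -
      have "((deriv ^^ 1) \<Phi>) differentiable (at x)" using Phi_smooth unfolding smooth_def by blast
      then show ?thesis unfolding p_def q_def by (simp add: DERIV_deriv_iff_real_differentiable)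
    qed
    have ode: "q x + (2 * x / (x^2 + a^2)) * p x = - 2 * \<Phi> x * (1 - (\<Phi> x)^2)" for x
      using Phi_ode unfolding p_def q_def by blast
    have odd: "\<Phi> (-x) = - \<Phi> x" for x using Phi_odd by blast
    have props: "p x > 0 \<and> (\<Phi> x)^2 \<le> 1 \<and> x * \<Phi> x \<ge> 0 \<and> p x \<ge> 1 - (\<Phi> x)^2" for x
      by (rule kink_props[OF a_pos dPhi dp ode odd Phi_top])
    define v1 where "v1 = deriv v"
    define v2 where "v2 = deriv v1"
    have dv: "(v has_real_derivative v1 x) (at x)" for x
    proof -
      have "((deriv ^^ 0) v) differentiable (at x)" using vsm unfolding smooth_def by blast
      then show ?thesis unfolding v1_def by (simp add: DERIV_deriv_iff_real_differentiable)
    qed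
    have dv1: "(v1 has_real_derivative v2 x) (at x)" for x
    proof -
      have "((deriv ^^ 1) v) differentiable (at x)" using vsm unfolding smooth_def by blast
      then show ?thesis unfolding v1_def v2_def by (simp add: DERIV_deriv_iff_real_differentiable)
    qed
    define V where "V = kink_potential a \<Phi>"
    have eq: "v2 x = (V x - lam) * v x" for x
      using eig[of x] unfolding V_def v2_def v1_def by (simp add: algebra_simps)
    have Rpos: "x^2 + a^2 > 0" for x :: real using a_pos by (simp add: add_nonneg_pos)
    have Rnz: "x^2 + a^2 \<noteq> 0" "a^2 + x^2 \<noteq> 0" for x :: real using Rpos[of x] a_pos by (simp_all add: add.commute)
    have qeq: "q x = - 2 * \<Phi> x * (1 - (\<Phi> x)^2) - (2 * x / (x^2 + a^2)) * p x" for x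
      using ode[of x] by simp
    define f where "f x = (x^2 + a^2) * p x" for x
    define G where "G x = - 2 * (x^2 + a^2) * \<Phi> x * (1 - (\<Phi> x)^2)" for x
    define H where "H x = a^2 * p x / (x^2 + a^2) + 4 * x * \<Phi> x * (1 - (\<Phi> x)^2)" for x
    have fpos: "f x > 0" for x unfolding f_def using Rpos[of x] props[of x] by simp
    have df: "(f has_real_derivative G x) (at x)" for x
    proof -
      have "(f has_real_derivative (2 * x * p x + (x^2 + a^2) * q x)) (at x)"
        unfolding f_def[abs_def]
        by (rule derivative_eq_intros dp refl | simp)+
      moreover have "2 * x * p x + (x^2 + a^2) * q x = G x"
        unfolding qeq G_def using Rnz[of x] by (simp add: field_simps)
      ultimately show ?thesis by simp
    qed
    have dG: "(G has_real_derivative (V x * f x - H x)) (at x)" for x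
    proof -
      have raw: "(G has_real_derivative
          (- 2 * (2 * x) * \<Phi> x * (1 - (\<Phi> x)^2) - 2 * (x^2 + a^2) * p x * (1 - (\<Phi> x)^2)
           + 2 * (x^2 + a^2) * \<Phi> x * (2 * \<Phi> x * p x))) (at x)"
        unfolding G_def[abs_def]
        by (rule derivative_eq_intros dPhi refl | simp | algebra)+
      have gen: "\<And>R P. R \<noteq> 0 \<Longrightarrow> a^2 / R^2 * (R * P) = a^2 * P / R"
        by (simp add: power2_eq_square)
      have k: "a^2 / (x^2 + a^2)^2 * ((x^2 + a^2) * p x) = a^2 * p x / (x^2 + a^2)"
        using gen[OF Rnz(1)[of x]] .
      have "V x * f x - H x = a^2 / (x^2 + a^2)^2 * ((x^2 + a^2) * p x)
              - 2 * (1 - 3 * (\<Phi> x)^2) * ((x^2 + a^2) * p x) - H x"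
        unfolding V_def kink_potential_def f_def by (simp only: left_diff_distrib)
      also have "\<dots> = - 2 * (1 - 3 * (\<Phi> x)^2) * ((x^2 + a^2) * p x) - 4 * x * \<Phi> x * (1 - (\<Phi> x)^2)"
        unfolding k H_def by (simp add: algebra_simps)
      finally have VfH: "V x * f x - H x = - 2 * (1 - 3 * (\<Phi> x)^2) * ((x^2 + a^2) * p x) - 4 * x * \<Phi> x * (1 - (\<Phi> x)^2)" .
      have alg: "- 2 * (2 * x) * \<Phi> x * (1 - (\<Phi> x)^2) - 2 * (x^2 + a^2) * p x * (1 - (\<Phi> x)^2)
           + 2 * (x^2 + a^2) * \<Phi> x * (2 * \<Phi> x * p x) = - 2 * (1 - 3 * (\<Phi> x)^2) * ((x^2 + a^2) * p x) - 4 * x * \<Phi> x * (1 - (\<Phi> x)^2)"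
        by algebra
      show ?thesis using raw unfolding alg VfH[symmetric] .
    qed
    have Hnn: "H x \<ge> 0" for x
    proof -
      have "1 - (\<Phi> x)^2 \<ge> 0" using props[of x] by simp
      hence "4 * x * \<Phi> x * (1 - (\<Phi> x)^2) \<ge> 0" using props[of x]
        by (metis mult.assoc mult_nonneg_nonneg zero_le_numeral)
      moreover have "a^2 * p x / (x^2 + a^2) \<ge> 0" using props[of x] Rpos[of x] by simp
      ultimately show ?thesis unfolding H_def by simp
    qed
    have Gb: "\<bar>G x\<bar> \<le> 2 * f x" for x
    proof -
      have o: "1 - (\<Phi> x)^2 \<ge> 0" using props[of x] by simp
      have Pb: "\<bar>\<Phi> x\<bar> \<le> 1" using props[of x] by (simp add: abs_square_le_1)
      have "\<bar>G x\<bar> = 2 * (x^2 + a^2) * (\<bar>\<Phi> x\<bar> * (1 - (\<Phi> x)^2))"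
        unfolding G_def using Rpos[of x] o by (simp add: abs_mult)
      also have "\<dots> \<le> 2 * (x^2 + a^2) * (1 * p x)"
        using Rpos[of x] o Pb props[of x]
        by (intro mult_left_mono mult_mono) auto
      finally show ?thesis unfolding f_def by (simp add: algebra_simps)
    qed
    have int: "integrable lborel (\<lambda>x. (v x)^2)" using vsi unfolding square_integrable_def by blast
    have Vnn: "V x - lam \<ge> 0" if "\<bar>\<Phi> x\<bar> > 9/10" for x
    proof -
      have "(9/10)^2 \<le> \<bar>\<Phi> x\<bar>^2" using that by (intro power_mono) auto
      hence "(\<Phi> x)^2 \<ge> 81/100" by (simp add: power2_eq_square)
      moreover have "a^2 / (x^2 + a^2)^2 \<ge> 0" by simp
      moreover have gen: "\<And>(A::real) (P::real) (l::real). 81/100 \<le> P \<Longrightarrow> 0 \<le> A \<Longrightarrow> l < 0 \<Longrightarrow> 0 \<le> A - 2 * (1 - 3 * P) - l"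
        by (simp add: algebra_simps)
      ultimately show ?thesis unfolding V_def kink_potential_def using lam by blast
    qed
    obtain N1 where N1: "\<And>x. x \<ge> N1 \<Longrightarrow> \<Phi> x > 9/10"
      using order_tendstoD(1)[OF Phi_top, of "9/10"] unfolding eventually_at_top_linorder by auto
    obtain N2 where N2: "\<And>x. x \<le> N2 \<Longrightarrow> \<Phi> x < - 9/10"
      using order_tendstoD(2)[OF Phi_bot, of "-9/10"] unfolding eventually_at_bot_linorder by auto
    have top: "((\<lambda>x. v x * v1 x) \<longlongrightarrow> 0) at_top \<and> ((\<lambda>x. (v x)^2) \<longlongrightarrow> 0) at_top"
    proof (rule tail_decay[OF dv dv1 _ int, of N1])
      fix x :: real assume "x \<ge> N1"
      hence "V x - lam \<ge> 0" using N1[of x] Vnn[of x] by simp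
      then show "v x * v2 x \<ge> 0" unfolding eq
        by (metis mult.left_commute mult_nonneg_nonneg zero_le_square)
    qed
    define u where "u x = v (- x)" for x
    define u1 where "u1 x = - v1 (- x)" for x
    define u2 where "u2 x = v2 (- x)" for x
    have du: "(u has_real_derivative u1 x) (at x)" for x
      using DERIV_mirror[of v "v1 (-x)" x] dv[of "-x"] unfolding u_def[abs_def] u1_def by simp
    have du1: "(u1 has_real_derivative u2 x) (at x)" for x
    proof -
      have "((\<lambda>x. v1 (- x)) has_real_derivative - v2 (- x)) (at x)"
        using DERIV_mirror[of v1 "v2 (-x)" x] dv1[of "-x"] by simp
      from DERIV_minus[OF this] show ?thesis unfolding u1_def[abs_def] u2_def by simp
    qed
    have intu: "integrable lborel (\<lambda>x. (u x)^2)"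
      using lborel_integrable_real_affine[OF int, of "-1" 0] unfolding u_def by simp
    have bot0: "((\<lambda>x. u x * u1 x) \<longlongrightarrow> 0) at_top \<and> ((\<lambda>x. (u x)^2) \<longlongrightarrow> 0) at_top"
    proof (rule tail_decay[OF du du1 _ intu, of "- N2"])
      fix x :: real assume "x \<ge> - N2"
      hence "V (-x) - lam \<ge> 0" using N2[of "-x"] Vnn[of "-x"] by simp
      then show "u x * u2 x \<ge> 0" unfolding u_def u2_def eq
        by (metis mult.left_commute mult_nonneg_nonneg zero_le_square)
    qed
    have bot1: "((\<lambda>x. v x * v1 x) \<longlongrightarrow> 0) at_bot"
      unfolding filterlim_at_bot_mirror
      using tendsto_minus[OF bot0[THEN conjunct1]] unfolding u_def u1_def by simp
    have bot2: "((\<lambda>x. (v x)^2) \<longlongrightarrow> 0) at_bot"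
      unfolding filterlim_at_bot_mirror
      using bot0[THEN conjunct2] unfolding u_def by simp
    obtain x0 where x0: "v x0 \<noteq> 0" using vnz by auto
    have "v x0 = 0"
      by (rule no_neg_eig[OF fpos df dG dv dv1 eq Hnn Gb lam top[THEN conjunct1] top[THEN conjunct2] bot1 bot2])
    then show False using x0 by simp
  qed
qed

end
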